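(* Among the $q-1$ $T$-sls-pencils there is exactly one Type-II-$T$-sls-pencil and there are $q-2$ Type-III-$T$-sls-pencils. Moreover: (1) if $q$ is even, the Type-II-$T$-sls-pencil meets the line $m_T$ in a Type-II-$T$-sls, and each Type-III-$T$-sls-pencil meets $m_T$ in a Type-III-$T$-sls; (2) if $q$ is odd, the Type-II-$T$-sls-pencil meets $m_T$ in a Type-III-$T$-sls, one Type-III-$T$-sls-pencil meets $m_T$ in a Type-II-$T$-sls, and the remaining $q-3$ Type-III-$T$-sls-pencils meet $m_T$ in Type-III-$T$-slses.
   Context: Let $q$ be a prime power, $\mathbb{F}_{q^3}^*=\mathbb{F}_{q^3}\setminus\{0\}$. Points of $\mathrm{PG}(2,q^3)$ have homogeneous coordinates $(x,y,z)$ and lines $[a,b,c]$. Let $\phi$ be the collineation $(x,y,z)\mapsto(z^q,x^q,y^q)$, acting on lines by $[d,e,f]\mapsto[f^q,d^q,e^q]$; its fixed points form the subplane $\mathcal P_{2,q}=\{(x,x^q,x^{q^2}):x\in\mathbb{F}_{q^3}^*\}$. A point has Type I, II or III according as its $\phi$-orbit is one point, three collinear points, or three non-collinear points; a line has Type I, II or III according as its $\phi$-orbit is one line, three concurrent lines, or three non-concurrent lines. Let $T=(0,0,1)$, $T^\phi=(1,0,0)$, $T^{\phi^2}=(0,1,0)$ and $m_T=T^\phi T^{\phi^2}$ the line $[0,0,1]$. Let $\mathsf S_T=\{\psi_t:t\in\mathbb{F}_{q^3}^*\}$ where $\psi_t:(x,y,z)\mapsto(tx,t^qy,t^{q^2}z)$.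 A $T$-sls is a point orbit of $\mathsf S_T$ of size $q^2+q+1$ contained in $m_T$ (there are $q-1$ of them, namely the sets $\{(x\theta,x^q,0):x\in\mathbb{F}_{q^3}^*\}$, $\theta\in\mathbb{F}_{q^3}^*$); it is Type-X if all its points have Type X. For a $T$-sls $\mathcal S$, the pencil $T\mathcal S=\{TX:X\in\mathcal S\}$ is a $T$-sls-pencil (it meets $m_T$ in $\mathcal S$); it is called Type-X if all its lines have Type X. *)

theory Defs
  imports Main "HOL-Computational_Algebra.Primes"
begin

(* Homogeneous coordinate triples over a field 'a (intended: GF(q^3)). *)
type_synonym 'a vec3 = "'a \<times> 'a \<times> 'a"

definition pclass :: "'a::field vec3 \<Rightarrow> 'a vec3 set" where
  "pclass v = (case v of (x, y, z) \<Rightarrow> {(c * x, c * y, c * z) | c. c \<noteq> 0})"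

(* Elements of PG(2,F): classes of nonzero triples. Points and lines are
   both represented this way (points (x,y,z), lines [a,b,c]). *)
definition is_pelem :: "'a::field vec3 set \<Rightarrow> bool" where
  "is_pelem P \<longleftrightarrow> (\<exists>v. v \<noteq> (0, 0, 0) \<and> P = pclass v)"

definition incident :: "'a::field vec3 set \<Rightarrow> 'a vec3 set \<Rightarrow> bool" where
  "incident P L \<longleftrightarrow> (\<exists>x y z a b c. (x, y, z) \<in> P \<and> (a, b, c) \<in> L \<and> a * x + b * y + c * z = 0)"

definition phi_v :: "nat \<Rightarrow> 'a::field vec3 \<Rightarrow> 'a vec3" where
  "phi_v q v = (case v of (x, y, z) \<Rightarrow> (z ^ q, x ^ q, y ^ q))"

definition phi :: "nat \<Rightarrow> 'a::field vec3 set \<Rightarrow> 'a vec3 set" where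
  "phi q P = phi_v q ` P"

definition phi_orbit :: "nat \<Rightarrow> 'a::field vec3 set \<Rightarrow> 'a vec3 set set" where
  "phi_orbit q P = {P, phi q P, phi q (phi q P)}"

definition collinear_pts :: "'a::field vec3 set set \<Rightarrow> bool" where
  "collinear_pts S \<longleftrightarrow> (\<exists>L. is_pelem L \<and> (\<forall>X\<in>S. incident X L))"

definition concurrent_lines :: "'a::field vec3 set set \<Rightarrow> bool" where
  "concurrent_lines S \<longleftrightarrow> (\<exists>X. is_pelem X \<and> (\<forall>L\<in>S. incident X L))"

definition pt_type1 :: "nat \<Rightarrow> 'a::field vec3 set \<Rightarrow> bool" where
  "pt_type1 q P \<longleftrightarrow> card (phi_orbit q P) = 1"
definition pt_type2 :: "nat \<Rightarrow> 'a::field vec3 set \<Rightarrow> bool" where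
  "pt_type2 q P \<longleftrightarrow> card (phi_orbit q P) = 3 \<and> collinear_pts (phi_orbit q P)"
definition pt_type3 :: "nat \<Rightarrow> 'a::field vec3 set \<Rightarrow> bool" where
  "pt_type3 q P \<longleftrightarrow> card (phi_orbit q P) = 3 \<and> \<not> collinear_pts (phi_orbit q P)"

definition line_type1 :: "nat \<Rightarrow> 'a::field vec3 set \<Rightarrow> bool" where
  "line_type1 q L \<longleftrightarrow> card (phi_orbit q L) = 1"
definition line_type2 :: "nat \<Rightarrow> 'a::field vec3 set \<Rightarrow> bool" where
  "line_type2 q L \<longleftrightarrow> card (phi_orbit q L) = 3 \<and> concurrent_lines (phi_orbit q L)"
definition line_type3 :: "nat \<Rightarrow> 'a::field vec3 set \<Rightarrow> bool" where
  "line_type3 q L \<longleftrightarrow> card (phi_orbit q L) = 3 \<and> \<not> concurrent_lines (phi_orbit q L)"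

definition ptT :: "'a::field vec3 set" where "ptT = pclass (0, 0, 1)"
definition lineMT :: "'a::field vec3 set" where "lineMT = pclass (0, 0, 1)"

definition psi_v :: "nat \<Rightarrow> 'a::field \<Rightarrow> 'a vec3 \<Rightarrow> 'a vec3" where
  "psi_v q t v = (case v of (x, y, z) \<Rightarrow> (t * x, t ^ q * y, t ^ (q ^ 2) * z))"

definition ST_orbit :: "nat \<Rightarrow> 'a::field vec3 set \<Rightarrow> 'a vec3 set set" where
  "ST_orbit q P = {psi_v q t ` P | t. t \<noteq> 0}"

definition T_slses :: "nat \<Rightarrow> 'a::field vec3 set set set" where
  "T_slses q = {Ob. \<exists>P. is_pelem P \<and> Ob = ST_orbit q P \<and> card Ob = q ^ 2 + q + 1
                      \<and> (\<forall>X\<in>Ob. incident X lineMT)}"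

definition sls_pencil :: "'a::field vec3 set set \<Rightarrow> 'a vec3 set set" where
  "sls_pencil S = {L. is_pelem L \<and> incident ptT L \<and> (\<exists>X\<in>S. incident X L)}"

definition meet_mT :: "'a::field vec3 set set \<Rightarrow> 'a vec3 set set" where
  "meet_mT Pc = {X. is_pelem X \<and> incident X lineMT \<and> (\<exists>L\<in>Pc. incident X L)}"

end

theory Submission
  imports Defs "HOL-Number_Theory.Residues"
begin

definition rot :: "'a::field ring" where
  "rot = \<lparr> carrier = UNIV, monoid.mult = (\<lambda>x y. x * y), one = 1, ring.zero = 0, add = (\<lambda> x y. x + y) \<rparr>"

lemma field_rot: "field (rot :: 'a::field ring)"
proof -
  have "\<exists>y. x + y = 0" for x :: 'a
    using add.right_inverse by blast
  moreover have "x \<noteq> 0 \<Longrightarrow> \<exists>y. x * y = 1" for x :: 'a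
    by (rule exI[of _ "inverse x"]) auto
  ultimately show ?thesis
    unfolding rot_def using add.right_inverse
    by unfold_locales (auto simp:algebra_simps Units_def)
qed

lemma pow_rot: "(x::'a::field) [^]\<^bsub>rot\<^esub> (n::nat) = x ^ n"
  by (induct n) (simp_all add: rot_def nat_pow_def)

lemma gen_exists:
  "\<exists>g::'a::{field,finite}. g \<noteq> 0 \<and> (\<forall>x. x \<noteq> 0 \<longrightarrow> (\<exists>i::nat. x = g ^ i))"
proof -
  interpret field "rot :: 'a ring" by (rule field_rot)
  have "finite (carrier (rot :: 'a ring))" by simp
  from finite_field_mult_group_has_gen[OF this] obtain a where a0: "a \<in> carrier (mult_of (rot :: 'a ring))" and
    a: "carrier (mult_of (rot :: 'a ring)) = {a[^]\<^bsub>rot\<^esub>i | i::nat . i \<in> UNIV}" by blast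
  have "a \<noteq> 0" using a0 by (simp add: rot_def)
  from a have "UNIV - {0} = {a ^ i | i::nat . i \<in> UNIV}"
    by (simp add: nat_pow_mult_of pow_rot) (simp add: rot_def)
  then show ?thesis using \<open>a \<noteq> 0\<close> by blast
qed

locale cyc =
  fixes g :: "'a::{field,finite}" and n :: nat
  assumes gen: "\<And>x. x \<noteq> 0 \<Longrightarrow> \<exists>i. x = g ^ i"
  and n_def: "n = card (UNIV - {0::'a})" and g_nz: "g \<noteq> 0"
begin


lemma ex_period: "\<exists>d>0. g ^ d = 1"
proof -
  have "\<not> inj (\<lambda>i::nat. g ^ i)"
  proof
    assume "inj (\<lambda>i::nat. g ^ i)"
    then have "finite (UNIV :: nat set)"
      using finite_imageD[of "\<lambda>i::nat. g ^ i" UNIV] by (simp add: finite_subset)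
    then show False by simp
  qed
  then obtain i j where "g ^ i = g ^ j" "i \<noteq> j"
    unfolding inj_def by blast
  then obtain i j where "g ^ i = g ^ j" "i < j"
    by (cases "i < j") (auto simp: not_less_iff_gr_or_eq, metis)
  moreover have "g ^ j = g ^ i * g ^ (j - i)" using \<open>i < j\<close>
    by (simp add: power_add[symmetric])
  ultimately have "g ^ i * g ^ (j - i) = g ^ i * 1" by simp
  then have "g ^ (j - i) = 1" using g_nz by simp
  then show ?thesis using \<open>i < j\<close> by (intro exI[of _ "j - i"]) simp
qed

definition d where "d = (LEAST d. d > 0 \<and> g ^ d = 1)"

lemma d_props: "d > 0" "g ^ d = 1"
  using LeastI_ex[OF ex_period] unfolding d_def by auto

lemma d_min: "0 < e \<Longrightarrow> e < d \<Longrightarrow> g ^ e \<noteq> 1"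
  unfolding d_def using not_less_Least by blast

lemma pow_mod_d: "g ^ i = g ^ (i mod d)"
proof -
  have "g ^ i = g ^ (d * (i div d) + i mod d)" by simp
  also have "\<dots> = (g ^ d) ^ (i div d) * g ^ (i mod d)"
    by (simp only: power_add power_mult)
  finally have "g ^ i = (g ^ d) ^ (i div d) * g ^ (i mod d)" .
  then show ?thesis using d_props by simp
qed

lemma inj_d: "inj_on (\<lambda>i. g ^ i) {..<d}"
proof (rule inj_onI, rule ccontr)
  fix i j assume ij: "i \<in> {..<d}" "j \<in> {..<d}" "g ^ i = g ^ j" "i \<noteq> j"
  have *: "g ^ a = g ^ b \<Longrightarrow> a < b \<Longrightarrow> b < d \<Longrightarrow> False" for a b
  proof -
    assume "g ^ a = g ^ b" "a < b" "b < d"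
    moreover have "g ^ b = g ^ a * g ^ (b - a)" using \<open>a < b\<close>
      by (simp add: power_add[symmetric])
    ultimately have "g ^ a * g ^ (b - a) = g ^ a * 1" by simp
    then have "g ^ (b - a) = 1" using g_nz by simp
    then show False using d_min[of "b - a"] \<open>a < b\<close> \<open>b < d\<close> by simp
  qed
  show False
  proof (cases "i < j")
    case True then show False using ij *[of i j] by auto
  next
    case False then have "j < i" using ij by auto
    then show False using ij *[of j i] by auto
  qed
qed

lemma img_d: "UNIV - {0} = (\<lambda>i. g ^ i) ` {..<d}"
proof
  show "UNIV - {0} \<subseteq> (\<lambda>i. g ^ i) ` {..<d}"
  proof
    fix x :: 'a assume "x \<in> UNIV - {0}"
    then obtain i where "x = g ^ i" using gen by blast
    then have "x = g ^ (i mod d)" using pow_mod_d by simp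
    then show "x \<in> (\<lambda>i. g ^ i) ` {..<d}" using d_props by auto
  qed
  show "(\<lambda>i. g ^ i) ` {..<d} \<subseteq> UNIV - {0}" using g_nz by auto
qed

lemma n_eq_d: "n = d"
  using n_def img_d card_image[OF inj_d] by simp

lemma n_pos: "n > 0" using n_eq_d d_props by simp

lemma g_pow_n: "g ^ n = 1" using n_eq_d d_props by simp

lemma g_pow_eq: "g ^ a = g ^ b \<longleftrightarrow> a mod n = b mod n"
proof
  assume "g ^ a = g ^ b"
  then have "g ^ (a mod n) = g ^ (b mod n)" using pow_mod_d n_eq_d by metis
  then show "a mod n = b mod n" using inj_d n_eq_d n_pos by (auto dest: inj_onD)
next
  assume "a mod n = b mod n" then show "g ^ a = g ^ b" using pow_mod_d n_eq_d by metis
qed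

lemma g_pow_1: "g ^ a = 1 \<longleftrightarrow> n dvd a"
  using g_pow_eq[of a 0] by (simp add: mod_eq_0_iff_dvd)

lemma pow_n: "(x::'a) \<noteq> 0 \<Longrightarrow> x ^ n = 1"
proof -
  assume "x \<noteq> 0" then obtain i where "x = g ^ i" using gen by blast
  then have "x ^ n = (g ^ n) ^ i" by (simp add: power_mult[symmetric] mult.commute)
  then show ?thesis using g_pow_n by simp
qed

end

locale cycq = cyc g n for g :: "'a::{field,finite}" and n +
  fixes q :: nat
  assumes nq: "n = q ^ 3 - 1" and q2: "2 \<le> q"
begin

definition M where "M = q ^ 2 + q + 1"
definition Nf :: "'a \<Rightarrow> 'a" where "Nf x = x ^ M"
definition NS where "NS = Nf ` (UNIV - {0})"

lemma M_pos: "M > 0" by (simp add: M_def)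

lemma n_M: "n = (q - 1) * M"
proof -
  obtain k where k: "q = Suc k" using q2 by (cases q) auto
  show ?thesis unfolding nq M_def unfolding k by (simp add: algebra_simps power2_eq_square power3_eq_cube)
qed

lemma frob: "(x::'a) ^ (q ^ 3) = x"
proof (cases "x = 0")
  case True then show ?thesis using q2 by simp
next
  case False
  have "q ^ 3 = n + 1" using nq q2 by (simp add: Suc_leI)
  then show ?thesis using pow_n[OF False] by simp
qed

lemma Nf_g: "Nf (g ^ i) = g ^ (i * M)"
  by (simp add: Nf_def power_mult)

lemma NS_eq: "NS = (\<lambda>j. g ^ (j * M)) ` {..<q-1}"
proof
  show "NS \<subseteq> (\<lambda>j. g ^ (j * M)) ` {..<q-1}"
  proof
    fix c assume "c \<in> NS"
    then obtain x where x: "x \<noteq> 0" "c = Nf x" unfolding NS_def by auto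
    then obtain i where i: "x = g ^ i" using gen by blast
    have "(i * M) mod n = (i mod (q - 1)) * M mod n"
      unfolding n_M by (simp add: mod_mult_mult2)
    then have "c = g ^ ((i mod (q - 1)) * M)" using x i Nf_g g_pow_eq by metis
    moreover have "i mod (q - 1) < q - 1" using q2 by simp
    ultimately show "c \<in> (\<lambda>j. g ^ (j * M)) ` {..<q-1}" by blast
  qed
  show "(\<lambda>j. g ^ (j * M)) ` {..<q-1} \<subseteq> NS"
  proof
    fix c assume "c \<in> (\<lambda>j. g ^ (j * M)) ` {..<q-1}"
    then obtain j where "c = g ^ (j * M)" by blast
    then have "c = Nf (g ^ j)" using Nf_g by simp
    then show "c \<in> NS" unfolding NS_def using g_nz by simp
  qed
qed

lemma inj_NS: "inj_on (\<lambda>j. g ^ (j * M)) {..<q-1}"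
proof (rule inj_onI)
  fix i j assume ij: "i \<in> {..<q-1}" "j \<in> {..<q-1}" "g ^ (i * M) = g ^ (j * M)"
  have "i * M < n" "j * M < n" using ij(1,2) M_pos unfolding n_M by auto
  then have "i * M = j * M" using ij(3) g_pow_eq by simp
  then show "i = j" using M_pos by simp
qed

lemma card_NS: "card NS = q - 1"
  using NS_eq inj_NS card_image by fastforce

definition K where "K = {u::'a. u \<noteq> 0 \<and> Nf u = 1}"

lemma K_eq: "K = (\<lambda>k. g ^ ((q - 1) * k)) ` {..<M}"
proof
  show "K \<subseteq> (\<lambda>k. g ^ ((q - 1) * k)) ` {..<M}"
  proof
    fix u assume "u \<in> K"
    then have u: "u \<noteq> 0" "Nf u = 1" unfolding K_def by auto
    then obtain i0 where "u = g ^ i0" using gen by blast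
    then have ui: "u = g ^ (i0 mod n)" using g_pow_eq by simp
    define i where "i = i0 mod n"
    have "i < n" unfolding i_def using n_pos by simp
    have "g ^ (i * M) = 1" using u ui Nf_g i_def by simp
    then have "(q - 1) * M dvd i * M" using g_pow_1 n_M by simp
    then have "(q - 1) dvd i" using M_pos by simp
    then obtain k where k: "i = (q - 1) * k" by blast
    have "k < M" using \<open>i < n\<close> k n_M by simp
    then show "u \<in> (\<lambda>k. g ^ ((q - 1) * k)) ` {..<M}" using ui i_def k by (intro image_eqI[of _ _ k]) auto
  qed
  show "(\<lambda>k. g ^ ((q - 1) * k)) ` {..<M} \<subseteq> K"
  proof
    fix u assume "u \<in> (\<lambda>k. g ^ ((q - 1) * k)) ` {..<M}"
    then obtain k where k: "u = g ^ ((q - 1) * k)" by blast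
    have "Nf u = g ^ (n * k)" unfolding k Nf_g n_M by (simp add: algebra_simps)
    then have "Nf u = 1" using g_pow_1 by simp
    then show "u \<in> K" unfolding K_def k using g_nz by simp
  qed
qed

lemma card_K: "card K = M"
proof -
  have "inj_on (\<lambda>k. g ^ ((q - 1) * k)) {..<M}"
  proof (rule inj_onI)
    fix i j assume ij: "i \<in> {..<M}" "j \<in> {..<M}" "g ^ ((q - 1) * i) = g ^ ((q - 1) * j)"
    have "(q - 1) * i < n" "(q - 1) * j < n" using ij(1,2) q2 unfolding n_M by auto
    then have "(q - 1) * i = (q - 1) * j" using ij(3) g_pow_eq by simp
    then show "i = j" using q2 by simp
  qed
  then show ?thesis using K_eq card_image by fastforce
qed

lemma Nf_mult: "Nf (x * y) = Nf x * Nf y"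
  by (simp add: Nf_def power_mult_distrib)

lemma Nf_nz: "x \<noteq> 0 \<Longrightarrow> Nf x \<noteq> 0" by (simp add: Nf_def)

lemma Nf_div: "Nf (x / y) = Nf x / Nf y"
  by (simp add: Nf_def power_divide)

lemma K_hilbert: "u \<in> K \<Longrightarrow> \<exists>a. a \<noteq> 0 \<and> u = a ^ q / a"
proof -
  assume "u \<in> K"
  then obtain k where k: "u = g ^ ((q - 1) * k)" using K_eq by blast
  have e: "k * q = (q - 1) * k + k" using q2 by (cases q) (auto simp: algebra_simps)
  have "(g ^ k) ^ q = g ^ (k * q)" by (simp add: power_mult)
  also have "\<dots> = g ^ ((q - 1) * k) * g ^ k" unfolding e by (simp add: power_add)
  finally have "(g ^ k) ^ q = g ^ ((q - 1) * k) * g ^ k" .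
  then have "u = (g ^ k) ^ q / g ^ k" using k g_nz by simp
  then show ?thesis using g_nz by (intro exI[of _ "g ^ k"]) simp
qed

lemma Nf_hilbert: "a \<noteq> 0 \<Longrightarrow> Nf (a ^ q / a) = 1"
proof -
  assume a: "a \<noteq> 0"
  have "q * M = M + n" unfolding n_M using q2 by (cases q) (auto simp: algebra_simps)
  then have "Nf (a ^ q) = Nf a * a ^ n" by (simp add: Nf_def power_mult[symmetric] power_add mult.commute)
  then have "Nf (a ^ q) = Nf a" using pow_n[OF a] by simp
  then show ?thesis using Nf_div Nf_nz[OF a] by simp
qed

lemma fiber_eq: "x0 \<noteq> 0 \<Longrightarrow> {x. x \<noteq> 0 \<and> Nf x = Nf x0} = (\<lambda>u. x0 * u) ` K"
proof -
  assume x0: "x0 \<noteq> 0"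
  show ?thesis
  proof
    show "{x. x \<noteq> 0 \<and> Nf x = Nf x0} \<subseteq> (\<lambda>u. x0 * u) ` K"
    proof
      fix x assume "x \<in> {x. x \<noteq> 0 \<and> Nf x = Nf x0}"
      then have x: "x \<noteq> 0" "Nf x = Nf x0" by auto
      have "x / x0 \<in> K" unfolding K_def using x x0 Nf_div Nf_nz by simp
      moreover have "x = x0 * (x / x0)" using x0 by simp
      ultimately show "x \<in> (\<lambda>u. x0 * u) ` K" by blast
    qed
    show "(\<lambda>u. x0 * u) ` K \<subseteq> {x. x \<noteq> 0 \<and> Nf x = Nf x0}"
      using x0 by (auto simp: K_def Nf_mult)
  qed
qed

lemma card_fiber: "c \<in> NS \<Longrightarrow> card {x. x \<noteq> 0 \<and> Nf x = c} = M"
proof -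
  assume "c \<in> NS"
  then obtain x0 where x0: "x0 \<noteq> 0" "c = Nf x0" unfolding NS_def by auto
  have "inj_on (\<lambda>u. x0 * u) K" using x0 by (auto intro: inj_onI)
  then have "card ((\<lambda>u. x0 * u) ` K) = card K" by (rule card_image)
  then show ?thesis using fiber_eq[OF x0(1)] x0(2) card_K by simp
qed

lemma M_odd: "odd M"
proof -
  have e: "M = q * (q + 1) + 1" unfolding M_def by (simp add: power2_eq_square algebra_simps)
  have "even (q * (q + 1))" by (cases "even q") auto
  then show ?thesis unfolding e by simp
qed

lemma Nf_neg: "Nf (- x) = - Nf x" unfolding Nf_def by (rule power_minus_odd[OF M_odd])
lemma Nf_1: "Nf 1 = 1" by (simp add: Nf_def)
lemma Nf_m1: "Nf (-1) = -1" using Nf_neg[of 1] Nf_1 by simp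

lemma one_NS: "1 \<in> NS" unfolding NS_def using Nf_1 by (intro image_eqI[of _ _ 1]) auto
lemma m1_NS: "-1 \<in> NS" unfolding NS_def using Nf_m1 by (intro image_eqI[of _ _ "-1"]) auto

lemma even_m1: "even q \<Longrightarrow> (-1::'a) = 1"
proof -
  assume "even q"
  then have "even (q ^ 3)" by simp
  moreover have "q ^ 3 \<ge> 1" using q2 by simp
  ultimately have "odd n" unfolding nq using q2 by (simp add: even_diff_nat)
  then have "(-1::'a) ^ n = -1" by simp
  moreover have "(-1::'a) ^ n = 1" using pow_n[of "-1"] by simp
  ultimately show ?thesis by simp
qed

end

lemma pclass_mem: "(a,b,c) \<in> pclass (x,y,z) \<longleftrightarrow> (\<exists>k. k \<noteq> 0 \<and> a = k*x \<and> b = k*y \<and> c = k*z)"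
  by (auto simp: pclass_def)

lemma pclass_self: "(x,y,z) \<in> pclass (x,y,z)"
  unfolding pclass_mem by (intro exI[of _ 1]) simp

lemma pclass_scale: "(k::'a::field) \<noteq> 0 \<Longrightarrow> pclass (k*x,k*y,k*z) = pclass (x,y,z)"
proof (intro Set.set_eqI iffI)
  fix w assume k: "k \<noteq> 0" and "w \<in> pclass (k*x,k*y,k*z)"
  then obtain c where "c \<noteq> 0" "w = (c*(k*x), c*(k*y), c*(k*z))" by (auto simp: pclass_def)
  then show "w \<in> pclass (x,y,z)" using k unfolding pclass_def
    by (auto intro!: exI[of _ "c*k"])
next
  fix w assume k: "k \<noteq> 0" and "w \<in> pclass (x,y,z)"
  then obtain c where "c \<noteq> 0" "w = (c*x, c*y, c*z)" by (auto simp: pclass_def)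
  then show "w \<in> pclass (k*x,k*y,k*z)" using k unfolding pclass_def
    by (auto intro!: exI[of _ "c/k"])
qed

lemma pclass_eq_iff: "pclass (x,y,z) = pclass (a,b,c) \<longleftrightarrow> (\<exists>k::'a::field. k \<noteq> 0 \<and> a = k*x \<and> b = k*y \<and> c = k*z)"
proof
  assume "pclass (x,y,z) = pclass (a,b,c)"
  then have "(a,b,c) \<in> pclass (x,y,z)" using pclass_self by metis
  then show "\<exists>k. k \<noteq> 0 \<and> a = k*x \<and> b = k*y \<and> c = k*z" by (simp add: pclass_mem)
next
  assume "\<exists>k. k \<noteq> 0 \<and> a = k*x \<and> b = k*y \<and> c = k*z"
  then show "pclass (x,y,z) = pclass (a,b,c)" using pclass_scale by metis
qed

lemma incident_pc: "incident (pclass (x,y,z)) (pclass (a,b,c)) \<longleftrightarrow> a*x+b*y+c*(z::'a::field) = 0"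
proof
  assume "incident (pclass (x,y,z)) (pclass (a,b,c))"
  then obtain k m where km: "k \<noteq> 0" "m \<noteq> 0" "(m*a)*(k*x) + (m*b)*(k*y) + (m*c)*(k*z) = 0"
    unfolding incident_def pclass_def by auto
  then have "(m*k) * (a*x+b*y+c*z) = 0" by (simp add: algebra_simps)
  then show "a*x+b*y+c*z = 0" using km by simp
next
  assume "a*x+b*y+c*z = 0"
  then show "incident (pclass (x,y,z)) (pclass (a,b,c))"
    unfolding incident_def using pclass_self by blast
qed

lemma is_pelem_iff: "is_pelem P \<longleftrightarrow> (\<exists>x y z. (x,y,z) \<noteq> (0,0,0) \<and> P = pclass (x,y,z))"
  unfolding is_pelem_def by auto

lemma pelem_pc: "(x,y,z) \<noteq> (0,0,0) \<Longrightarrow> is_pelem (pclass (x,y,z))"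
  unfolding is_pelem_def by blast

lemma psi_pc: "(t::'a::field) \<noteq> 0 \<Longrightarrow> psi_v q t ` pclass (x,y,z) = pclass (t*x, t^q*y, t^(q^2)*z)"
  unfolding pclass_def psi_v_def by (auto simp: algebra_simps image_def)

lemma card3: "a \<noteq> b \<Longrightarrow> a \<noteq> c \<Longrightarrow> b \<noteq> c \<Longrightarrow> card {a,b,c} = 3" by simp

definition Pt :: "'a::field \<Rightarrow> 'a vec3 set" where "Pt th = pclass (th, 1, 0)"
definition Ln :: "'a::field \<Rightarrow> 'a vec3 set" where "Ln th = pclass (1, - th, 0)"

lemma Pt_inj: "Pt a = Pt b \<longleftrightarrow> a = b"
  unfolding Pt_def pclass_eq_iff by auto

lemma Ln_inj: "Ln a = Ln b \<longleftrightarrow> a = b"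
  unfolding Ln_def pclass_eq_iff by auto

context
  fixes q :: nat
  assumes frob: "\<And>w::'a::field. w ^ (q ^ 3) = w" and qpos: "q > 0"
begin

lemma phi_pc: "phi q (pclass (x,y,z)) = pclass (z^q, x^q, (y::'a)^q)"
proof (intro Set.set_eqI iffI)
  fix w assume "w \<in> phi q (pclass (x,y,z))"
  then obtain k where "k \<noteq> 0" "w = phi_v q (k*x,k*y,k*z)" unfolding phi_def pclass_def by auto
  then show "w \<in> pclass (z^q, x^q, y^q)" unfolding pclass_def phi_v_def
    by (auto simp: power_mult_distrib intro!: exI[of _ "k^q"])
next
  fix w assume "w \<in> pclass (z^q, x^q, y^q)"
  then obtain k where k: "k \<noteq> 0" "w = (k*z^q, k*x^q, k*y^q)" unfolding pclass_def by auto
  define c where "c = k ^ (q^2)"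
  have "c ^ q = k" unfolding c_def using frob[of k] by (simp add: power_mult[symmetric] power3_eq_cube power2_eq_square)
  moreover have "c \<noteq> 0" using k unfolding c_def by simp
  ultimately have "w = phi_v q (c*x,c*y,c*z)" "(c*x,c*y,c*z) \<in> pclass (x,y,z)" using k
    by (auto simp: phi_v_def power_mult_distrib pclass_mem)
  then show "w \<in> phi q (pclass (x,y,z))" unfolding phi_def by blast
qed


lemma orbit_Pt: "phi_orbit q (Pt (th::'a)) = {pclass (th,1,0), pclass (0, th^q, 1), pclass (1, 0, th^(q^2))}"
  unfolding phi_orbit_def Pt_def using qpos
  by (simp add: phi_pc power_mult[symmetric] power2_eq_square zero_power)

lemma orbit_Ln: "phi_orbit q (Ln (th::'a)) = {pclass (1,-th,0), pclass (0, 1, (-th)^q), pclass ((-th)^(q^2), 0, 1)}"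
  unfolding phi_orbit_def Ln_def using qpos
  by (simp add: phi_pc power_mult[symmetric] power2_eq_square zero_power)

lemma card_orbit_Pt: "card (phi_orbit q (Pt (th::'a))) = 3"
  unfolding orbit_Pt by (rule card3) (auto simp: pclass_eq_iff)

lemma card_orbit_Ln: "card (phi_orbit q (Ln (th::'a))) = 3"
  unfolding orbit_Ln by (rule card3) (auto simp: pclass_eq_iff)

lemma collinear_Pt: "collinear_pts (phi_orbit q (Pt (th::'a))) \<longleftrightarrow> th ^ (q^2+q+1) = -1"
proof
  assume "collinear_pts (phi_orbit q (Pt th))"
  then obtain L where L: "is_pelem L" and inc: "\<forall>X\<in>phi_orbit q (Pt th). incident X L"
    unfolding collinear_pts_def by blast
  from L obtain a b e where nz: "(a,b,e) \<noteq> (0,0,0)" and Le: "L = pclass (a,b,e)"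
    unfolding is_pelem_iff by blast
  have i: "a*th + b = 0" "b * th^q + e = 0" "a + e * th^(q^2) = 0"
    using inc unfolding orbit_Pt Le by (auto simp: incident_pc algebra_simps)
  have b: "b = - (a*th)" using i(1) by (simp add: eq_neg_iff_add_eq_0 add.commute)
  have e: "e = a * th^(q+1)" using i(2) b by (simp add: eq_neg_iff_add_eq_0 algebra_simps)
  have a: "a \<noteq> 0" using nz b e by auto
  have "a * (1 + th^(q^2+q+1)) = 0" using i(3) e by (simp add: algebra_simps power_add)
  then show "th ^ (q^2+q+1) = -1" using a by (simp add: eq_neg_iff_add_eq_0 add.commute)
next
  assume N: "th ^ (q^2+q+1) = -1"
  let ?L = "pclass (1, -th, th^(q+1))"
  have "is_pelem ?L" by (rule pelem_pc) simp
  moreover have "1 + th^(q+1) * th^(q^2) = 0" using N by (simp add: power_add[symmetric] algebra_simps)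
  ultimately show "collinear_pts (phi_orbit q (Pt th))"
    unfolding collinear_pts_def orbit_Pt by (intro exI[of _ ?L]) (auto simp: incident_pc algebra_simps)
qed

lemma concurrent_Ln: "concurrent_lines (phi_orbit q (Ln (th::'a))) \<longleftrightarrow> (-th) ^ (q^2+q+1) = -1"
proof -
  define uu where "uu = - th"
  have "concurrent_lines (phi_orbit q (Ln th)) \<longleftrightarrow> uu ^ (q^2+q+1) = -1"
  proof
    assume "concurrent_lines (phi_orbit q (Ln th))"
    then obtain X where X: "is_pelem X" and inc: "\<forall>L\<in>phi_orbit q (Ln th). incident X L"
      unfolding concurrent_lines_def by blast
    from X obtain x y z where nz: "(x,y,z) \<noteq> (0,0,0)" and Xe: "X = pclass (x,y,z)"
      unfolding is_pelem_iff by blast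
    have i: "x + uu * y = 0" "y + uu^q * z = 0" "uu^(q^2) * x + z = 0"
      using inc unfolding orbit_Ln Xe uu_def[symmetric] by (auto simp: incident_pc algebra_simps)
    have y: "y = - (uu^q * z)" using i(2) by (simp add: eq_neg_iff_add_eq_0 add.commute)
    have x: "x = uu^(q+1) * z" using i(1) y by (simp add: eq_neg_iff_add_eq_0 algebra_simps)
    have z: "z \<noteq> 0" using nz x y by auto
    have "z * (1 + uu^(q^2+q+1)) = 0" using i(3) x by (simp add: algebra_simps power_add)
    then show "uu ^ (q^2+q+1) = -1" using z by (simp add: eq_neg_iff_add_eq_0 add.commute)
  next
    assume N: "uu ^ (q^2+q+1) = -1"
    let ?X = "pclass (uu^(q+1), - (uu^q), 1)"
    have "is_pelem ?X" by (rule pelem_pc) simp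
    moreover have "uu^(q^2) * uu^(q+1) + 1 = 0" using N by (simp add: power_add[symmetric] algebra_simps)
    ultimately show "concurrent_lines (phi_orbit q (Ln th))"
      unfolding concurrent_lines_def orbit_Ln uu_def[symmetric]
      by (intro exI[of _ ?X]) (auto simp: incident_pc algebra_simps)
  qed
  then show ?thesis unfolding uu_def .
qed

end

context cycq
begin

lemma qpos: "q > 0" using q2 by simp

definition fib where "fib c = {x. x \<noteq> 0 \<and> Nf x = c}"

lemma fib_nz: "fib c \<subseteq> UNIV - {0}" unfolding fib_def by auto

lemma fib_ne: "c \<in> NS \<Longrightarrow> fib c \<noteq> {}"
  unfolding NS_def fib_def by auto

lemma card_fib: "c \<in> NS \<Longrightarrow> card (Pt ` fib c) = M"
proof -
  assume c: "c \<in> NS"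
  have "inj_on Pt (fib c)" by (auto intro: inj_onI simp: Pt_inj)
  then show ?thesis using card_fiber[OF c] card_image unfolding fib_def by metis
qed

lemma Nf_inverse: "Nf (inverse x) = inverse (Nf x)"
  by (simp add: Nf_def power_inverse)

lemma ST_orbit_Pt:
  assumes th: "th \<noteq> 0"
  shows "ST_orbit q (Pt th) = Pt ` fib (Nf th)"
proof -
  have "ST_orbit q (Pt th) = {Pt (th * (t / t ^ q)) | t. t \<noteq> 0}"
  proof -
    have psi_eq: "psi_v q t ` Pt th = Pt (th * (t / t ^ q))" if t: "t \<noteq> 0" for t
    proof -
      have "psi_v q t ` Pt th = pclass (t * th, t ^ q * 1, t ^ (q^2) * 0)"
        unfolding Pt_def by (rule psi_pc[OF t])
      also have "\<dots> = pclass (t ^ q * (th * (t / t ^ q)), t ^ q * 1, t ^ q * 0)"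
        using t by (simp add: field_simps)
      also have "\<dots> = Pt (th * (t / t ^ q))" unfolding Pt_def
        by (rule pclass_scale) (simp add: t)
      finally show ?thesis .
    qed
    show ?thesis
    proof (rule Set.set_eqI, rule iffI)
      fix X assume "X \<in> ST_orbit q (Pt th)"
      then obtain t where "t \<noteq> 0" "X = psi_v q t ` Pt th" unfolding ST_orbit_def by blast
      then show "X \<in> {Pt (th * (t / t ^ q)) | t. t \<noteq> 0}" using psi_eq by blast
    next
      fix X assume "X \<in> {Pt (th * (t / t ^ q)) | t. t \<noteq> 0}"
      then obtain t where "t \<noteq> 0" "X = Pt (th * (t / t ^ q))" by blast
      then show "X \<in> ST_orbit q (Pt th)" unfolding ST_orbit_def using psi_eq by blast
    qed
  qed
  also have "\<dots> = Pt ` fib (Nf th)"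
  proof (intro Set.set_eqI iffI)
    fix X assume "X \<in> {Pt (th * (t / t ^ q)) | t. t \<noteq> 0}"
    then obtain t where t: "t \<noteq> 0" "X = Pt (th * (t / t ^ q))" by blast
    have "t / t ^ q = inverse (t ^ q / t)" by simp
    then have "Nf (t / t ^ q) = inverse (Nf (t ^ q / t))" using Nf_inverse by metis
    then have "Nf (t / t ^ q) = 1" using Nf_hilbert[OF t(1)] by simp
    then have "Nf (th * (t / t ^ q)) = Nf th" using Nf_mult[of th "t / t ^ q"] by simp
    then have "th * (t / t ^ q) \<in> fib (Nf th)" unfolding fib_def using th t by simp
    then show "X \<in> Pt ` fib (Nf th)" using t by blast
  next
    fix X assume "X \<in> Pt ` fib (Nf th)"
    then obtain x where x: "x \<in> fib (Nf th)" "X = Pt x" by blast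
    then have "x \<in> (\<lambda>u. th * u) ` K" using fiber_eq[OF th] unfolding fib_def by simp
    then obtain u where u: "u \<in> K" "x = th * u" by blast
    obtain a where a: "a \<noteq> 0" "u = a ^ q / a" using K_hilbert[OF u(1)] by blast
    define t where "t = inverse a"
    have "t \<noteq> 0" using a t_def by simp
    moreover have "t / t ^ q = u" using a unfolding t_def by (simp add: power_inverse field_simps)
    ultimately show "X \<in> {Pt (th * (t / t ^ q)) | t. t \<noteq> 0}" using x u by blast
  qed
  finally show ?thesis .
qed

lemma ST_orbit_single:
  assumes "\<And>t. t \<noteq> 0 \<Longrightarrow> psi_v q t ` P = P"
  shows "ST_orbit q P = {P}"
proof (rule Set.set_eqI, rule iffI)
  fix X assume "X \<in> ST_orbit q P"
  then obtain t where "t \<noteq> 0" "X = psi_v q t ` P" unfolding ST_orbit_def by blast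
  then show "X \<in> {P}" using assms by simp
next
  fix X assume "X \<in> {P}"
  then have "X = psi_v q 1 ` P" using assms[of 1] by simp
  then show "X \<in> ST_orbit q P" unfolding ST_orbit_def by auto
qed

lemma T_slses_eq: "T_slses q = (\<lambda>c. Pt ` fib c) ` NS"
proof (rule Set.set_eqI, rule iffI)
  fix Ob :: "'a vec3 set set" assume "Ob \<in> T_slses q"
  then obtain P where P: "is_pelem P" "Ob = ST_orbit q P" "card Ob = q ^ 2 + q + 1"
    and inc: "\<forall>X\<in>Ob. incident X lineMT" unfolding T_slses_def by blast
  obtain x y z where nz: "(x,y,z) \<noteq> (0,0,0)" and Pe: "P = pclass (x,y,z)"
    using P(1) unfolding is_pelem_iff by blast
  have "psi_v q 1 ` P = P" unfolding Pe using psi_pc[of 1 q x y z] by simp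
  then have "P \<in> Ob" unfolding P(2) ST_orbit_def by force
  then have "incident P lineMT" using inc by blast
  then have "z = 0" unfolding Pe lineMT_def by (simp add: incident_pc)
  have cardne: "card Ob \<noteq> 1" using P(3) q2 by simp
  show "Ob \<in> (\<lambda>c. Pt ` fib c) ` NS"
  proof (cases "y = 0")
    case True
    then have x: "x \<noteq> 0" using nz \<open>z = 0\<close> by simp
    have "P = pclass (1,0,0)" unfolding Pe True \<open>z = 0\<close>
      using pclass_scale[OF x, of 1 0 0] by simp
    moreover have "psi_v q t ` pclass (1,0,0) = pclass (1,0,0)" if "t \<noteq> 0" for t
      using psi_pc[OF that, of q 1 0 0] pclass_scale[OF that, of 1 0 0] by simp
    ultimately have "Ob = {P}" unfolding P(2) using ST_orbit_single by metis
    then show ?thesis using cardne by simp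
  next
    case False
    show ?thesis
    proof (cases "x = 0")
      case True
      have "P = pclass (0,1,0)" unfolding Pe True \<open>z = 0\<close>
        using pclass_scale[OF False, of 0 1 0] by simp
      moreover have "psi_v q t ` pclass (0,1,0) = pclass (0,1,0)" if "t \<noteq> 0" for t
        using psi_pc[OF that, of q 0 1 0] pclass_scale[of "t^q" 0 1 0] that by simp
      ultimately have "Ob = {P}" unfolding P(2) using ST_orbit_single by metis
      then show ?thesis using cardne by simp
    next
      case x: False
      have "P = Pt (x / y)" unfolding Pe \<open>z = 0\<close> Pt_def
        using pclass_scale[OF False, of "x/y" 1 0] False by simp
      then have "Ob = Pt ` fib (Nf (x / y))" using ST_orbit_Pt P(2) x False by simp
      moreover have "Nf (x / y) \<in> NS" unfolding NS_def using x False by simp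
      ultimately show ?thesis by blast
    qed
  qed
next
  fix Ob assume "Ob \<in> (\<lambda>c. Pt ` fib c) ` NS"
  then obtain c where c: "c \<in> NS" "Ob = Pt ` fib c" by blast
  then obtain th where th: "th \<noteq> 0" "c = Nf th" unfolding NS_def by auto
  have "is_pelem (Pt th)" unfolding Pt_def by (rule pelem_pc) simp
  moreover have "Ob = ST_orbit q (Pt th)" using ST_orbit_Pt th c by simp
  moreover have "card Ob = q ^ 2 + q + 1" using card_fib c M_def by simp
  moreover have "\<forall>X\<in>Ob. incident X lineMT" unfolding c lineMT_def Pt_def by (auto simp: incident_pc)
  ultimately show "Ob \<in> T_slses q" unfolding T_slses_def by blast
qed

lemma pencil_eq: assumes C: "C \<subseteq> UNIV - {0}" shows "sls_pencil (Pt ` C) = Ln ` C"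
proof (rule Set.set_eqI, rule iffI)
  fix L assume "L \<in> sls_pencil (Pt ` C)"
  then have L: "is_pelem L" "incident ptT L" and "\<exists>X\<in>Pt ` C. incident X L"
    unfolding sls_pencil_def by auto
  then obtain th where th: "th \<in> C" "incident (Pt th) L" by blast
  obtain a b e where nz: "(a,b,e) \<noteq> (0,0,0)" and Le: "L = pclass (a,b,e)"
    using L(1) unfolding is_pelem_iff by blast
  have e: "e = 0" using L(2) unfolding Le ptT_def by (simp add: incident_pc)
  have b: "b = - (a * th)" using th(2) unfolding Le Pt_def by (simp add: incident_pc eq_neg_iff_add_eq_0 add.commute)
  have a: "a \<noteq> 0" using nz b e by auto
  have "L = Ln th" unfolding Le Ln_def e b using pclass_scale[OF a, of 1 "- th" 0] by simp
  then show "L \<in> Ln ` C" using th by blast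
next
  fix L assume "L \<in> Ln ` C"
  then obtain th where th: "th \<in> C" "L = Ln th" by blast
  have "is_pelem L" unfolding th Ln_def by (rule pelem_pc) simp
  moreover have "incident ptT L" unfolding th Ln_def ptT_def by (simp add: incident_pc)
  moreover have "incident (Pt th) L" unfolding th Ln_def Pt_def by (simp add: incident_pc)
  ultimately show "L \<in> sls_pencil (Pt ` C)" unfolding sls_pencil_def using th by blast
qed

lemma meet_eq: assumes C: "C \<subseteq> UNIV - {0}" shows "meet_mT (Ln ` C) = Pt ` C"
proof (rule Set.set_eqI, rule iffI)
  fix X assume "X \<in> meet_mT (Ln ` C)"
  then have X: "is_pelem X" "incident X lineMT" and "\<exists>L\<in>Ln ` C. incident X L"
    unfolding meet_mT_def by auto
  then obtain th where th: "th \<in> C" "incident X (Ln th)" by blast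
  obtain x y z where nz: "(x,y,z) \<noteq> (0,0,0)" and Xe: "X = pclass (x,y,z)"
    using X(1) unfolding is_pelem_iff by blast
  have z: "z = 0" using X(2) unfolding Xe lineMT_def by (simp add: incident_pc)
  have x: "x = th * y" using th(2) unfolding Xe Ln_def by (simp add: incident_pc)
  have y: "y \<noteq> 0" using nz x z by auto
  have "X = Pt th" unfolding Xe Pt_def z x using pclass_scale[OF y, of th 1 0] by (simp add: mult.commute)
  then show "X \<in> Pt ` C" using th by blast
next
  fix X assume "X \<in> Pt ` C"
  then obtain th where th: "th \<in> C" "X = Pt th" by blast
  have "is_pelem X" unfolding th Pt_def by (rule pelem_pc) simp
  moreover have "incident X lineMT" unfolding th Pt_def lineMT_def by (simp add: incident_pc)
  moreover have "incident X (Ln th)" unfolding th Ln_def Pt_def by (simp add: incident_pc)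
  ultimately show "X \<in> meet_mT (Ln ` C)" unfolding meet_mT_def using th by blast
qed

lemma Nf_M: "Nf (x::'a) = x ^ (q^2+q+1)" unfolding Nf_def M_def ..

lemma neg_pow: "(- (x::'a)) ^ (q^2+q+1) = - (x ^ (q^2+q+1))" using Nf_neg[of x] unfolding Nf_M .

lemma line2: "line_type2 q (Ln (th::'a)) \<longleftrightarrow> Nf th = 1"
  unfolding line_type2_def using card_orbit_Ln[OF frob qpos] concurrent_Ln[OF frob qpos]
  by (simp only: Nf_M neg_pow) auto

lemma line3: "line_type3 q (Ln (th::'a)) \<longleftrightarrow> Nf th \<noteq> 1"
  unfolding line_type3_def using card_orbit_Ln[OF frob qpos] concurrent_Ln[OF frob qpos]
  by (simp only: Nf_M neg_pow) auto

lemma pt2: "pt_type2 q (Pt (th::'a)) \<longleftrightarrow> Nf th = -1"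
  unfolding pt_type2_def using card_orbit_Pt[OF frob qpos] collinear_Pt[OF frob qpos]
  by (simp only: Nf_M) auto

lemma pt3: "pt_type3 q (Pt (th::'a)) \<longleftrightarrow> Nf th \<noteq> -1"
  unfolding pt_type3_def using card_orbit_Pt[OF frob qpos] collinear_Pt[OF frob qpos]
  by (simp only: Nf_M) auto

end

lemma card_filter_image:
  assumes "inj_on f A" "\<And>c. c \<in> A \<Longrightarrow> P (f c) \<longleftrightarrow> Q c"
  shows "card {x \<in> f ` A. P x} = card {c \<in> A. Q c}"
proof -
  have "{x \<in> f ` A. P x} = f ` {c \<in> A. Q c}" using assms(2) by auto
  moreover have "inj_on f {c \<in> A. Q c}" using assms(1) by (rule inj_on_subset) auto
  ultimately show ?thesis by (simp add: card_image)
qed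

context cycq
begin

lemma fibD: "x \<in> fib c \<Longrightarrow> Nf x = c \<and> x \<noteq> 0" unfolding fib_def by auto

lemma all_fib: "c \<in> NS \<Longrightarrow> (\<forall>x\<in>fib c. R (Nf x)) \<longleftrightarrow> R c"
  using fib_ne[of c] fibD by blast

lemma F_line2: "c \<in> NS \<Longrightarrow> (\<forall>L\<in>Ln ` fib c. line_type2 q L) \<longleftrightarrow> c = 1"
  using all_fib[of c "\<lambda>v. v = 1"] line2 by simp
lemma F_line3: "c \<in> NS \<Longrightarrow> (\<forall>L\<in>Ln ` fib c. line_type3 q L) \<longleftrightarrow> c \<noteq> 1"
  using all_fib[of c "\<lambda>v. v \<noteq> 1"] line3 by simp
lemma F_pt2: "c \<in> NS \<Longrightarrow> (\<forall>X\<in>meet_mT (Ln ` fib c). pt_type2 q X) \<longleftrightarrow> c = -1"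
  using all_fib[of c "\<lambda>v. v = -1"] pt2 meet_eq[OF fib_nz] by simp
lemma F_pt3: "c \<in> NS \<Longrightarrow> (\<forall>X\<in>meet_mT (Ln ` fib c). pt_type3 q X) \<longleftrightarrow> c \<noteq> -1"
  using all_fib[of c "\<lambda>v. v \<noteq> -1"] pt3 meet_eq[OF fib_nz] by simp

lemma F_inj: "inj_on (\<lambda>c. Ln ` fib c) NS"
proof (rule inj_onI)
  fix c c' assume c: "c \<in> NS" "c' \<in> NS" "Ln ` fib c = Ln ` fib c'"
  obtain x where x: "x \<in> fib c" using fib_ne[OF c(1)] by blast
  then have "Ln x \<in> Ln ` fib c'" using c(3) by blast
  then obtain x' where "x' \<in> fib c'" "Ln x = Ln x'" by blast
  then show "c = c'" using x fibD Ln_inj by metis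
qed

lemma PS_eq: "sls_pencil ` T_slses q = (\<lambda>c. Ln ` fib c) ` NS"
  unfolding T_slses_eq image_image using pencil_eq[OF fib_nz] by simp

end

lemma odd_m1:
  assumes "card (UNIV :: 'a::{field,finite} set) = q ^ 3" "odd q"
  shows "(-1::'a) \<noteq> 1"
proof
  assume "(-1::'a) = 1"
  then have "(of_nat 2 :: 'a) = 0" by (metis add_eq_0_iff_both_eq_0 eq_neg_iff_add_eq_0 of_nat_numeral one_add_one)
  then have "CHAR('a) dvd 2" by (metis of_nat_eq_0_iff_char_dvd)
  moreover have "CHAR('a) \<noteq> 1" by simp
  moreover have "CHAR('a) \<le> 2" using calculation(1) by (rule dvd_imp_le) simp
  moreover have "CHAR('a) \<noteq> 0" using calculation(1) by (metis dvd_0_left_iff zero_neq_numeral)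
  ultimately have "CHAR('a) = 2" by linarith
  then have "2 dvd q ^ 3" using CHAR_dvd_CARD[where 'a='a] assms(1) by simp
  then show False using assms(2) by simp
qed

theorem corollary2p4:
  fixes q :: nat
  defines "PS \<equiv> (sls_pencil ` T_slses q :: ('a::{field,finite}) vec3 set set set)"
  assumes "\<exists>p k. prime p \<and> k > 0 \<and> q = p ^ k"
    and "card (UNIV :: 'a set) = q ^ 3"
  shows "card PS = q - 1
    \<and> card {Pc \<in> PS. \<forall>L\<in>Pc. line_type2 q L} = 1
    \<and> card {Pc \<in> PS. \<forall>L\<in>Pc. line_type3 q L} = q - 2
    \<and> (even q \<longrightarrow>
          (\<forall>Pc\<in>PS. ((\<forall>L\<in>Pc. line_type2 q L) \<longrightarrow> (\<forall>X\<in>meet_mT Pc. pt_type2 q X))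
                   \<and> ((\<forall>L\<in>Pc. line_type3 q L) \<longrightarrow> (\<forall>X\<in>meet_mT Pc. pt_type3 q X))))
    \<and> (odd q \<longrightarrow>
          (\<forall>Pc\<in>PS. (\<forall>L\<in>Pc. line_type2 q L) \<longrightarrow> (\<forall>X\<in>meet_mT Pc. pt_type3 q X))
        \<and> card {Pc \<in> PS. (\<forall>L\<in>Pc. line_type3 q L) \<and> (\<forall>X\<in>meet_mT Pc. pt_type2 q X)} = 1
        \<and> card {Pc \<in> PS. (\<forall>L\<in>Pc. line_type3 q L) \<and> (\<forall>X\<in>meet_mT Pc. pt_type3 q X)} = q - 3)"
proof -
  obtain p k where pk: "prime p" "k > 0" "q = p ^ k" using assms(2) by blast
  have q2: "2 \<le> q"
  proof -
    have "p \<ge> 2" using pk(1) by (simp add: prime_ge_2_nat)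
    moreover have "p ^ 1 \<le> p ^ k" using pk(2) \<open>p \<ge> 2\<close> by (intro power_increasing) auto
    ultimately show ?thesis using pk(3) by simp
  qed
  obtain g :: 'a where g: "g \<noteq> 0" "\<And>x. x \<noteq> 0 \<Longrightarrow> \<exists>i. x = g ^ i" using gen_exists by blast
  define n where "n = card (UNIV - {0::'a})"
  have nq: "n = q ^ 3 - 1" unfolding n_def using assms(3) by (simp add: card_Diff_singleton)
  interpret cycq g n q
    by unfold_locales (use g n_def nq q2 in auto)
  define F where "F c = Ln ` fib c" for c
  have PS: "PS = F ` NS" unfolding PS_def F_def using PS_eq by simp
  have inj: "inj_on F NS" unfolding F_def using F_inj .
  have c1: "card PS = q - 1" unfolding PS using card_image[OF inj] card_NS by simp
  have c2: "card {Pc \<in> PS. \<forall>L\<in>Pc. line_type2 q L} = 1"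
  proof -
    have "card {Pc \<in> PS. \<forall>L\<in>Pc. line_type2 q L} = card {c \<in> NS. c = 1}"
      unfolding PS by (rule card_filter_image[OF inj]) (use F_line2 in \<open>unfold F_def, blast\<close>)
    also have "{c \<in> NS. c = 1} = {1}" using one_NS by auto
    finally show ?thesis by simp
  qed
  have c3: "card {Pc \<in> PS. \<forall>L\<in>Pc. line_type3 q L} = q - 2"
  proof -
    have "card {Pc \<in> PS. \<forall>L\<in>Pc. line_type3 q L} = card {c \<in> NS. c \<noteq> 1}"
      unfolding PS by (rule card_filter_image[OF inj]) (use F_line3 in \<open>unfold F_def, blast\<close>)
    also have "{c \<in> NS. c \<noteq> 1} = NS - {1}" by auto
    also have "card (NS - {1}) = q - 2" using one_NS card_NS by (simp add: card_Diff_singleton)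
    finally show ?thesis .
  qed
  have c4: "even q \<longrightarrow>
          (\<forall>Pc\<in>PS. ((\<forall>L\<in>Pc. line_type2 q L) \<longrightarrow> (\<forall>X\<in>meet_mT Pc. pt_type2 q X))
                   \<and> ((\<forall>L\<in>Pc. line_type3 q L) \<longrightarrow> (\<forall>X\<in>meet_mT Pc. pt_type3 q X)))"
  proof (rule impI, rule ballI, rule conjI)
    fix Pc assume e: "even q" and "Pc \<in> PS"
    then obtain c where c: "c \<in> NS" "Pc = F c" unfolding PS by blast
    have m: "(-1::'a) = 1" using even_m1[OF e] .
    have l2: "(\<forall>L\<in>Pc. line_type2 q L) \<longleftrightarrow> c = 1" using F_line2[OF c(1)] unfolding c(2) F_def .
    have p2: "(\<forall>X\<in>meet_mT Pc. pt_type2 q X) \<longleftrightarrow> c = -1" using F_pt2[OF c(1)] unfolding c(2) F_def .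
    have l3: "(\<forall>L\<in>Pc. line_type3 q L) \<longleftrightarrow> c \<noteq> 1" using F_line3[OF c(1)] unfolding c(2) F_def .
    have p3: "(\<forall>X\<in>meet_mT Pc. pt_type3 q X) \<longleftrightarrow> c \<noteq> -1" using F_pt3[OF c(1)] unfolding c(2) F_def .
    show "(\<forall>L\<in>Pc. line_type2 q L) \<longrightarrow> (\<forall>X\<in>meet_mT Pc. pt_type2 q X)"
      using l2 p2 m by simp
    show "(\<forall>L\<in>Pc. line_type3 q L) \<longrightarrow> (\<forall>X\<in>meet_mT Pc. pt_type3 q X)"
      using l3 p3 m by simp
  qed
  have c5: "odd q \<longrightarrow>
          (\<forall>Pc\<in>PS. (\<forall>L\<in>Pc. line_type2 q L) \<longrightarrow> (\<forall>X\<in>meet_mT Pc. pt_type3 q X))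
        \<and> card {Pc \<in> PS. (\<forall>L\<in>Pc. line_type3 q L) \<and> (\<forall>X\<in>meet_mT Pc. pt_type2 q X)} = 1
        \<and> card {Pc \<in> PS. (\<forall>L\<in>Pc. line_type3 q L) \<and> (\<forall>X\<in>meet_mT Pc. pt_type3 q X)} = q - 3"
  proof (intro impI conjI)
    assume o: "odd q"
    have m: "(-1::'a) \<noteq> 1" using odd_m1[OF assms(3) o] .
    show "\<forall>Pc\<in>PS. (\<forall>L\<in>Pc. line_type2 q L) \<longrightarrow> (\<forall>X\<in>meet_mT Pc. pt_type3 q X)"
    proof (rule ballI, rule impI)
      fix Pc assume "Pc \<in> PS" "\<forall>L\<in>Pc. line_type2 q L"
      then obtain c where c: "c \<in> NS" "Pc = F c" "\<forall>L\<in>F c. line_type2 q L" unfolding PS by blast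
      then have "c = 1" using F_line2[OF c(1)] unfolding F_def by blast
      then have "c \<noteq> -1" using m by simp
      then show "\<forall>X\<in>meet_mT Pc. pt_type3 q X" using F_pt3[OF c(1)] unfolding c(2) F_def by blast
    qed
    have "card {Pc \<in> PS. (\<forall>L\<in>Pc. line_type3 q L) \<and> (\<forall>X\<in>meet_mT Pc. pt_type2 q X)}
        = card {c \<in> NS. c \<noteq> 1 \<and> c = -1}"
      unfolding PS by (rule card_filter_image[OF inj]) (use F_line3 F_pt2 in \<open>unfold F_def, blast\<close>)
    also have "{c \<in> NS. c \<noteq> 1 \<and> c = -1} = {-1}" using m m1_NS by auto
    finally show "card {Pc \<in> PS. (\<forall>L\<in>Pc. line_type3 q L) \<and> (\<forall>X\<in>meet_mT Pc. pt_type2 q X)} = 1"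
      by simp
    have "card {Pc \<in> PS. (\<forall>L\<in>Pc. line_type3 q L) \<and> (\<forall>X\<in>meet_mT Pc. pt_type3 q X)}
        = card {c \<in> NS. c \<noteq> 1 \<and> c \<noteq> -1}"
      unfolding PS by (rule card_filter_image[OF inj]) (use F_line3 F_pt3 in \<open>unfold F_def, blast\<close>)
    also have "{c \<in> NS. c \<noteq> 1 \<and> c \<noteq> -1} = NS - {1, -1}" by auto
    also have "card (NS - {1, -1}) = card NS - card {1, -1::'a}"
      using one_NS m1_NS by (intro card_Diff_subset) auto
    also have "\<dots> = q - 3" using card_NS m by simp
    finally show "card {Pc \<in> PS. (\<forall>L\<in>Pc. line_type3 q L) \<and> (\<forall>X\<in>meet_mT Pc. pt_type3 q X)} = q - 3" .
  qed
  show ?thesis using c1 c2 c3 c4 c5 by blast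
qed

end
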